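(* Let $A$ be a finite non-empty alphabet. For all non-empty words $\mathbf a,\mathbf b\in A^+$ of equal length, $\mathbf a:\mathbf a^r::\mathbf b:\mathbf b^r$ holds in $(A^+,\cdot,A^+)$. Consequently $\mathbf a:\mathbf a^r::\mathbf a^r:\mathbf a$ for every $\mathbf a\in A^+$.
   Context: $A^+$ is the set of non-empty finite words over $A$; $\mathbf a^r:=a_n\ldots a_1$ is the reverse of $\mathbf a=a_1\ldots a_n$. $(A^+,\cdot,A^+)$ is the algebra with universe $A^+$, concatenation, and every non-empty word as a constant. Terms are built from a denumerable variable set, concatenation and these constants; $X(s)$ is the set of variables of $s$. A justification is a pair $s\to t$ with $X(t)\subseteq X(s)$. $\uparrow(\mathbf a\to\mathbf b)$ is the set of justifications $s\to t$ with $\mathbf a=s(\mathbf o)$, $\mathbf b=t(\mathbf o)$ for some tuple $\mathbf o$ of elements of $A^+$; $\uparrow(\mathbf a\to\mathbf b:\!\cdot\,\mathbf c\to\mathbf d):=\uparrow(\mathbf a\to\mathbf b)\cap\uparrow(\mathbf c\to\mathbf d)$. A justification is trivial if it lies in all sets $\uparrow(\mathbf a'\to\mathbf b':\!\cdot\,\mathbf c'\to\mathbf d')$. $\mathbf a\to\mathbf b:\!\cdot\,\mathbf c\to\mathbf d$ holds iff either (i) all justifications in $\uparrow(\mathbf a\to\mathbf b)\cup\uparrow(\mathbf c\to\mathbf d)$ are trivial, or (ii) $J_{\mathbf d}:=\uparrow(\mathbf a\to\mathbf b:\!\cdot\,\mathbf c\to\mathbf d)$ contains a non-trivial justification and for every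 $\mathbf d'$, $J_{\mathbf d}\subseteq J_{\mathbf d'}$ implies $J_{\mathbf d'}$ contains a non-trivial justification and $J_{\mathbf d'}\subseteq J_{\mathbf d}$ (ignoring trivial justifications). $\mathbf a:\mathbf b::\mathbf c:\mathbf d$ iff $\mathbf a\to\mathbf b:\!\cdot\,\mathbf c\to\mathbf d$, $\mathbf b\to\mathbf a:\!\cdot\,\mathbf d\to\mathbf c$, $\mathbf c\to\mathbf d:\!\cdot\,\mathbf a\to\mathbf b$, $\mathbf d\to\mathbf c:\!\cdot\,\mathbf b\to\mathbf a$ all hold. *)

theory Defs
  imports Main
begin

text \<open>Words over the alphabet 'a are lists; A^+ is the set of non-empty lists.
  The alphabet is the (finite, non-empty) type 'a.  Terms of the algebra
  (A^+, concatenation, A^+) over the denumerable variable set nat.\<close>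

datatype 'a wterm = Var nat | Const "'a list" | Cat "'a wterm" "'a wterm"

fun wf_term :: "'a wterm \<Rightarrow> bool" where
  "wf_term (Var x) = True"
| "wf_term (Const w) = (w \<noteq> [])"
| "wf_term (Cat s t) = (wf_term s \<and> wf_term t)"

fun vars :: "'a wterm \<Rightarrow> nat set" where
  "vars (Var x) = {x}"
| "vars (Const w) = {}"
| "vars (Cat s t) = vars s \<union> vars t"

fun eval :: "(nat \<Rightarrow> 'a list) \<Rightarrow> 'a wterm \<Rightarrow> 'a list" where
  "eval \<sigma> (Var x) = \<sigma> x"
| "eval \<sigma> (Const w) = w"
| "eval \<sigma> (Cat s t) = eval \<sigma> s @ eval \<sigma> t"

definition is_justification :: "'a wterm \<Rightarrow> 'a wterm \<Rightarrow> bool" where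
  "is_justification s t \<longleftrightarrow> wf_term s \<and> wf_term t \<and> vars t \<subseteq> vars s"

definition up :: "'a list \<Rightarrow> 'a list \<Rightarrow> ('a wterm \<times> 'a wterm) set" where
  "up a b = {(s, t). is_justification s t \<and>
      (\<exists>\<sigma>. (\<forall>x. \<sigma> x \<noteq> []) \<and> eval \<sigma> s = a \<and> eval \<sigma> t = b)}"

definition up2 :: "'a list \<Rightarrow> 'a list \<Rightarrow> 'a list \<Rightarrow> 'a list \<Rightarrow> ('a wterm \<times> 'a wterm) set" where
  "up2 a b c d = up a b \<inter> up c d"

definition trivial :: "('a wterm \<times> 'a wterm) \<Rightarrow> bool" where
  "trivial j \<longleftrightarrow> (\<forall>a' b' c' d'. a' \<noteq> [] \<and> b' \<noteq> [] \<and> c' \<noteq> [] \<and> d' \<noteq> [] \<longrightarrow>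
                    j \<in> up2 a' b' c' d')"

definition nontriv :: "('a wterm \<times> 'a wterm) set \<Rightarrow> ('a wterm \<times> 'a wterm) set" where
  "nontriv J = {j \<in> J. \<not> trivial j}"

definition arrow_prop :: "'a list \<Rightarrow> 'a list \<Rightarrow> 'a list \<Rightarrow> 'a list \<Rightarrow> bool" where
  "arrow_prop a b c d \<longleftrightarrow>
     (\<forall>j \<in> up a b \<union> up c d. trivial j) \<or>
     (nontriv (up2 a b c d) \<noteq> {} \<and>
      (\<forall>d'. d' \<noteq> [] \<longrightarrow> nontriv (up2 a b c d) \<subseteq> nontriv (up2 a b c d') \<longrightarrow>
            nontriv (up2 a b c d') \<noteq> {} \<and> nontriv (up2 a b c d') \<subseteq> nontriv (up2 a b c d)))"

definition analogy :: "'a list \<Rightarrow> 'a list \<Rightarrow> 'a list \<Rightarrow> 'a list \<Rightarrow> bool" where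
  "analogy a b c d \<longleftrightarrow> arrow_prop a b c d \<and> arrow_prop b a d c \<and>
                       arrow_prop c d a b \<and> arrow_prop d c b a"

end

theory Submission
  imports Defs
begin

fun lt :: "nat \<Rightarrow> 'a wterm" where
  "lt 0 = Var 0"
| "lt (Suc k) = Cat (lt k) (Var (Suc k))"

fun rt :: "nat \<Rightarrow> 'a wterm" where
  "rt 0 = Var 0"
| "rt (Suc k) = Cat (Var (Suc k)) (rt k)"

lemma eval_lt: "eval \<sigma> (lt k) = concat (map \<sigma> [0..<Suc k])"
  by (induction k) auto

lemma eval_rt: "eval \<sigma> (rt k) = concat (map \<sigma> (rev [0..<Suc k]))"
  by (induction k) auto

lemma vars_lt: "vars (lt k) = {0..k}"
  by (induction k) (auto simp: atLeast0_atMost_Suc)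

lemma vars_rt: "vars (rt k) = {0..k}"
  by (induction k) (auto simp: atLeast0_atMost_Suc)

lemma wf_lt: "wf_term (lt k)" by (induction k) auto
lemma wf_rt: "wf_term (rt k)" by (induction k) auto

lemma len_concat_ge:
  "\<forall>x\<in>set xs. x \<noteq> [] \<Longrightarrow> length (concat xs) = length xs \<Longrightarrow> \<forall>x\<in>set xs. length x = 1"
proof (induction xs)
  case Nil then show ?case by simp
next
  case (Cons x xs)
  have "length (concat xs) \<ge> length xs"
    using Cons.prems(1)
  proof (induction xs)
    case (Cons y ys)
    then have "length y \<ge> 1" by (cases y) auto
    then show ?case using Cons by auto
  qed simp
  moreover have "length x \<ge> 1" using Cons.prems(1) by (cases x) auto
  ultimately have "length x = 1" "length (concat xs) = length xs" using Cons.prems(2) by auto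
  then show ?case using Cons by auto
qed

lemma rev_concat1: "\<forall>x\<in>set xs. length x = 1 \<Longrightarrow> rev (concat xs) = concat (rev xs)"
proof (induction xs)
  case Nil then show ?case by simp
next
  case (Cons x xs)
  then have "rev x = x" by (cases x) auto
  then show ?case using Cons by auto
qed

lemma j0_in: "(lt k, rt k) \<in> up u (rev u)" if "length u = Suc k" for u :: "'a list"
proof -
  define \<sigma> where "\<sigma> = (\<lambda>i. [u ! i])"
  have "concat (map \<sigma> [0..<n]) = take n u" if "n \<le> Suc k" for n
    using that
  proof (induction n)
    case 0 then show ?case by simp
  next
    case (Suc n)
    then show ?case using \<open>length u = Suc k\<close> by (auto simp: \<sigma>_def take_Suc_conv_app_nth)
  qed
  from this[of "Suc k"] have e: "concat (map \<sigma> [0..<Suc k]) = u" using that by (simp del: upt_Suc)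
  have r: "rev u = concat (rev (map \<sigma> [0..<Suc k]))"
    by (subst e[symmetric], rule rev_concat1) (auto simp: \<sigma>_def)
  have e1: "eval \<sigma> (lt k) = u" using e by (simp add: eval_lt del: upt_Suc)
  have e2: "eval \<sigma> (rt k) = rev u" using r by (simp add: eval_rt rev_map[symmetric] del: upt_Suc)
  show ?thesis unfolding up_def is_justification_def
    using e1 e2 by (auto simp: wf_lt wf_rt vars_lt vars_rt \<sigma>_def intro!: exI[of _ \<sigma>])
qed

lemma j0_det: "(lt k, rt k) \<in> up v d \<Longrightarrow> length v = Suc k \<Longrightarrow> d = rev v"
proof -
  assume "(lt k, rt k) \<in> up v d" "length v = Suc k"
  then obtain \<sigma> where ne: "\<forall>x. \<sigma> x \<noteq> []" and ev: "eval \<sigma> (lt k) = v" and ed: "eval \<sigma> (rt k) = d"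
    unfolding up_def by auto
  have "\<forall>x\<in>set (map \<sigma> [0..<Suc k]). length x = 1"
    using len_concat_ge[of "map \<sigma> [0..<Suc k]"] ne ev \<open>length v = Suc k\<close>
    by (auto simp: eval_lt)
  then show ?thesis using rev_concat1[of "map \<sigma> [0..<Suc k]"] ev ed
    by (simp add: eval_lt eval_rt rev_map del: upt_Suc)
qed

lemma j0_nontriv: "\<not> trivial (lt k, rt k :: 'a wterm)"
proof
  assume "trivial (lt k, rt k :: 'a wterm)"
  then have "(lt k, rt k :: 'a wterm) \<in> up [undefined] [undefined, undefined]"
    unfolding trivial_def up2_def by blast
  then obtain \<sigma> :: "nat \<Rightarrow> 'a list" where "eval \<sigma> (lt k) = [undefined]" "eval \<sigma> (rt k) = [undefined, undefined]"
    unfolding up_def by auto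
  then have "length (eval \<sigma> (lt k)) \<noteq> length (eval \<sigma> (rt k))" by simp
  moreover have "length (eval \<sigma> (lt k)) = length (eval \<sigma> (rt k))"
    by (simp add: eval_lt eval_rt length_concat rev_map[symmetric] sum_list_rev del: upt_Suc)
  ultimately show False by simp
qed

lemma arrow_rev:
  fixes u v :: "'a list"
  assumes "u \<noteq> []" "length u = length v"
  shows "arrow_prop u (rev u) v (rev v)"
proof -
  obtain k where k: "length u = Suc k" using assms(1) by (cases u) auto
  have kv: "length v = Suc k" using k assms by simp
  have j: "(lt k, rt k) \<in> nontriv (up2 u (rev u) v (rev v))"
    unfolding nontriv_def up2_def using j0_in[OF k] j0_in[OF kv] j0_nontriv by auto
  show ?thesis unfolding arrow_prop_def
  proof (rule disjI2, intro conjI allI impI)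
    show "nontriv (up2 u (rev u) v (rev v)) \<noteq> {}" using j by auto
  next
    fix d' :: "'a list"
    assume "nontriv (up2 u (rev u) v (rev v)) \<subseteq> nontriv (up2 u (rev u) v d')"
    then have "(lt k, rt k) \<in> up v d'" using j unfolding nontriv_def up2_def by auto
    then have "d' = rev v" using j0_det kv by blast
    then show "nontriv (up2 u (rev u) v d') \<noteq> {}"
      "nontriv (up2 u (rev u) v d') \<subseteq> nontriv (up2 u (rev u) v (rev v))" using j by auto
  qed
qed

lemma analogy_rev:
  fixes a b :: "'a list"
  assumes "a \<noteq> []" "b \<noteq> []" "length a = length b"
  shows "analogy a (rev a) b (rev b)"
  unfolding analogy_def
  using arrow_rev[of a b] arrow_rev[of "rev a" "rev b"] arrow_rev[of b a] arrow_rev[of "rev b" "rev a"] assms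
  by simp

theorem mainTheorem15:
  shows "(\<forall>a b :: 'a :: finite list. a \<noteq> [] \<and> b \<noteq> [] \<and> length a = length b \<longrightarrow>
            analogy a (rev a) b (rev b)) \<and>
         (\<forall>a :: 'a list. a \<noteq> [] \<longrightarrow> analogy a (rev a) (rev a) a)"
  using analogy_rev[of "a" "rev a" for a :: "'a list"]
  by (auto intro: analogy_rev)

end
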